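(* Fix $1<p\le 2$ and $x,y,z,w\in L_p$. Then $$\|y-z\|_p^2+(p-1)\|x-w\|_p^2\le \|x-y\|_p^2+\|y-w\|_p^2+\|w-z\|_p^2+\|z-x\|_p^2.$$
   Context: $L_p$ denotes the Lebesgue space $L_p$ (of an arbitrary measure space) with norm $\|\cdot\|_p$. *)

theory Defs
  imports "HOL-Analysis.Analysis"
begin

definition memLp :: "real \<Rightarrow> 'a measure \<Rightarrow> ('a \<Rightarrow> real) \<Rightarrow> bool" where
  "memLp p M f \<longleftrightarrow> f \<in> borel_measurable M \<and> integrable M (\<lambda>x. \<bar>f x\<bar> powr p)"

definition Lp_norm :: "real \<Rightarrow> 'a measure \<Rightarrow> ('a \<Rightarrow> real) \<Rightarrow> real" where
  "Lp_norm p M f = (\<integral>x. \<bar>f x\<bar> powr p \<partial>M) powr (1 / p)"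

end

theory Submission
  imports Defs
begin

lemma two_le_powr_sum:
  fixes s q :: real
  assumes "0 \<le> s" "s < 1" "q \<le> 1"
  shows "2 \<le> (1+s) powr (q-1) + (1-s) powr (q-1)"
proof -
  define u where "u = (1+s) powr (q-1)"
  define v where "v = (1-s) powr (q-1)"
  have uv: "u * v = (1 - s * s) powr (q-1)"
    using assms unfolding u_def v_def by (simp add: powr_mult[symmetric] algebra_simps)
  have "1 \<le> (1 - s * s) powr (q-1)"
  proof -
    have "(1 - s * s) powr (q-1) = (1/(1-s * s)) powr (1-q)"
      using assms by (simp add: powr_divide powr_minus_divide[symmetric] powr_minus)
    also have "1 \<le> \<dots>"
    proof (intro ge_one_powr_ge_zero)
      have "s * s < 1" using assms proof -
        have "s * s \<le> s * 1" using assms by (intro mult_left_mono) auto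
        then show ?thesis using assms by simp
      qed
      moreover have "0 \<le> s * s" by simp
      ultimately show "1 \<le> 1 / (1 - s * s)" by (simp add: field_simps)
    qed (use assms in auto)
    finally show ?thesis .
  qed
  then have "1 \<le> u * v" using uv by simp
  moreover have "0 \<le> (u - v)^2" by simp
  ultimately have "2^2 \<le> (u + v)^2"
    by (simp add: power2_eq_square algebra_simps)
  moreover have "0 \<le> u + v" unfolding u_def v_def by simp
  ultimately have "2 \<le> u + v"
    by (rule power2_le_imp_le)
  then show ?thesis unfolding u_def v_def .
qed

lemma h_ineq:
  fixes q x :: real
  assumes "0 < q" "q \<le> 1" "0 \<le> x" "x \<le> 1"
  shows "2*q*x \<le> (1+x) powr q - (1-x) powr q"
proof -
  define f where "f = (\<lambda>s::real. (1+s) powr q - (1-s) powr q - 2*q* s)"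
  have "f 0 \<le> f x"
  proof (rule DERIV_nonneg_imp_increasing_open[OF assms(3)])
    fix s :: real assume s: "0 < s" "s < x"
    have "(f has_real_derivative (q*(1+s) powr (q-1) + q*(1-s) powr (q-1) - 2*q)) (at s)"
      unfolding f_def using s assms
      by (auto intro!: derivative_eq_intros simp: algebra_simps)
    moreover have "0 \<le> q*(1+s) powr (q-1) + q*(1-s) powr (q-1) - 2*q"
    proof -
      have "q * 2 \<le> q * ((1+s) powr (q-1) + (1-s) powr (q-1))"
        using two_le_powr_sum[of s q] s assms by (intro mult_left_mono) auto
      then show ?thesis by (simp add: algebra_simps)
    qed
    ultimately show "\<exists>y. (f has_real_derivative y) (at s) \<and> 0 \<le> y" by blast
  next
    show "continuous_on {0..x} f"
      unfolding f_def using assms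
      by (intro continuous_intros continuous_on_powr') auto
  qed
  then show ?thesis unfolding f_def by simp
qed

lemma phi_ineq:
  fixes p x :: real
  assumes "1 < p" "p \<le> 2" "0 \<le> x" "x \<le> 1"
  shows "2 + p*(p-1)*x^2 \<le> (1+x) powr p + (1-x) powr p"
proof -
  define f where "f = (\<lambda>s::real. (1+s) powr p + (1-s) powr p - p*(p-1)* s^2)"
  have "f 0 \<le> f x"
  proof (rule DERIV_nonneg_imp_increasing_open[OF assms(3)])
    fix s :: real assume s: "0 < s" "s < x"
    have "(f has_real_derivative (p*(1+s) powr (p-1) - p*(1-s) powr (p-1) - 2*p*(p-1)* s)) (at s)"
      unfolding f_def using s assms
      by (auto intro!: derivative_eq_intros simp: algebra_simps)
    moreover have "0 \<le> p*(1+s) powr (p-1) - p*(1-s) powr (p-1) - 2*p*(p-1)* s"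
    proof -
      have "2*(p-1)* s \<le> (1+s) powr (p-1) - (1-s) powr (p-1)"
        using h_ineq[of "p-1" s] s assms by auto
      then have "p*(2*(p-1)* s) \<le> p*((1+s) powr (p-1) - (1-s) powr (p-1))"
        using assms by (intro mult_left_mono) auto
      then show ?thesis by (simp add: algebra_simps)
    qed
    ultimately show "\<exists>y. (f has_real_derivative y) (at s) \<and> 0 \<le> y" by blast
  next
    show "continuous_on {0..x} f"
      unfolding f_def using assms
      by (intro continuous_intros continuous_on_powr') auto
  qed
  then show ?thesis unfolding f_def by simp
qed

lemma abs_sum_powr_sym:
  fixes a b p :: real
  shows "\<bar>a+b\<bar> powr p + \<bar>a-b\<bar> powr p = (\<bar>a\<bar>+\<bar>b\<bar>) powr p + \<bar>\<bar>a\<bar>-\<bar>b\<bar>\<bar> powr p"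
proof -
  have "(\<bar>a+b\<bar> = \<bar>a\<bar>+\<bar>b\<bar> \<and> \<bar>a-b\<bar> = \<bar>\<bar>a\<bar>-\<bar>b\<bar>\<bar>) \<or> (\<bar>a+b\<bar> = \<bar>\<bar>a\<bar>-\<bar>b\<bar>\<bar> \<and> \<bar>a-b\<bar> = \<bar>a\<bar>+\<bar>b\<bar>)"
  proof (cases "a \<ge> 0"; cases "b \<ge> 0")
    assume "a \<ge> 0" "b \<ge> 0" then show ?thesis by simp
  next
    assume "a \<ge> 0" "\<not> b \<ge> 0" then show ?thesis by simp
  next
    assume "\<not> a \<ge> 0" "b \<ge> 0" then show ?thesis by (simp add: abs_minus_commute add.commute)
  next
    assume "\<not> a \<ge> 0" "\<not> b \<ge> 0" then show ?thesis by (simp add: abs_minus_commute)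
  qed
  then show ?thesis by auto
qed

lemma bernoulli_powr:
  fixes r t :: real
  assumes "0 \<le> r" "r \<le> 1" "0 \<le> t"
  shows "(1 + t) powr r \<le> 1 + r * t"
proof -
  have "(1+t) powr r * 1 powr (1-r) \<le> r * (1+t) + (1-r) * 1"
    using assms by (intro Youngs_inequality_0) auto
  then show ?thesis by (simp add: algebra_simps)
qed

lemma two_point_aux:
  fixes p a b :: real
  assumes "1 < p" "p \<le> 2" "\<bar>b\<bar> \<le> \<bar>a\<bar>"
  shows "(a^2 + (p-1) * b^2) powr (p/2) \<le> (\<bar>a+b\<bar> powr p + \<bar>a-b\<bar> powr p) / 2"
proof (cases "a = 0")
  case True
  then have "b = 0" using assms by simp
  then show ?thesis using True by simp
next
  case False
  define A where "A = \<bar>a\<bar>"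
  define x where "x = \<bar>b\<bar> / A"
  have A: "A > 0" using False A_def by simp
  have x: "0 \<le> x" "x \<le> 1" using assms A unfolding x_def A_def by (auto simp: field_simps)
  have bx: "\<bar>b\<bar> = A * x" using A unfolding x_def by simp
  have r1: "\<bar>a+b\<bar> powr p + \<bar>a-b\<bar> powr p = A powr p * ((1+x) powr p + (1-x) powr p)"
  proof -
    have e: "\<bar>\<bar>a\<bar>-\<bar>b\<bar>\<bar> = A - A * x" using assms bx A_def by simp
    have "\<bar>a+b\<bar> powr p + \<bar>a-b\<bar> powr p = (A + A * x) powr p + (A - A * x) powr p"
      unfolding abs_sum_powr_sym e using bx A_def by simp
    also have "\<dots> = (A * (1+x)) powr p + (A * (1-x)) powr p" by (simp add: algebra_simps)
    also have "\<dots> = A powr p * ((1+x) powr p + (1-x) powr p)"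
      using A x powr_mult[of A "1+x" p] powr_mult[of A "1-x" p] by (simp add: algebra_simps)
    finally show ?thesis .
  qed
  have l1: "(a^2 + (p-1) * b^2) powr (p/2) = A powr p * (1 + (p-1) * x^2) powr (p/2)"
  proof -
    have "a^2 + (p-1) * b^2 = A^2 * (1 + (p-1) * x^2)"
    proof -
      have "a^2 = A^2" unfolding A_def by simp
      moreover have "b^2 = (A * x)^2" by (subst bx[symmetric]) simp
      ultimately
      show ?thesis by (simp add: power_mult_distrib algebra_simps)
    qed
    moreover have "(A^2) powr (p/2) = A powr p"
    proof -
      have "A^2 = A powr 2" using A by (simp add: powr_realpow)
      then have "(A^2) powr (p/2) = A powr (2 * (p/2))" by (simp add: powr_powr)
      then show ?thesis by simp
    qed
    moreover have "0 \<le> 1 + (p-1) * x^2" using assms by simp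
    ultimately show ?thesis using A by (simp add: powr_mult)
  qed
  have "(1 + (p-1) * x^2) powr (p/2) \<le> 1 + (p/2) * ((p-1) * x^2)"
    using assms by (intro bernoulli_powr) auto
  also have "\<dots> \<le> ((1+x) powr p + (1-x) powr p) / 2"
    using phi_ineq[OF assms(1,2) x] by (simp add: field_simps)
  finally have "A powr p * (1 + (p-1) * x^2) powr (p/2) \<le> A powr p * (((1+x) powr p + (1-x) powr p) / 2)"
    by (intro mult_left_mono) auto
  then show ?thesis using l1 r1 by simp
qed

lemma two_point:
  fixes p a b :: real
  assumes "1 < p" "p \<le> 2"
  shows "(a^2 + (p-1) * b^2) powr (p/2) \<le> (\<bar>a+b\<bar> powr p + \<bar>a-b\<bar> powr p) / 2"
proof (cases "\<bar>b\<bar> \<le> \<bar>a\<bar>")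
  case True
  then show ?thesis using two_point_aux assms by blast
next
  case False
  have "(b^2 + (p-1) * a^2) powr (p/2) \<le> (\<bar>b+a\<bar> powr p + \<bar>b-a\<bar> powr p) / 2"
    using False assms by (intro two_point_aux) auto
  moreover have "(a^2 + (p-1) * b^2) powr (p/2) \<le> (b^2 + (p-1) * a^2) powr (p/2)"
  proof (intro powr_mono2)
    have "a^2 \<le> b^2" using False by (simp add: abs_le_square_iff)
    then have "(2-p) * a^2 \<le> (2-p) * b^2" using assms by (intro mult_left_mono) auto
    then show "a^2 + (p-1) * b^2 \<le> b^2 + (p-1) * a^2" by (simp add: algebra_simps)
  qed (use assms in auto)
  moreover have "\<bar>b+a\<bar> = \<bar>a+b\<bar>" "\<bar>b-a\<bar> = \<bar>a-b\<bar>" by (simp_all add: add.commute abs_minus_commute)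
  ultimately show ?thesis by simp
qed

lemma le_powr_small:
  fixes t r :: real
  assumes "0 \<le> t" "t \<le> 1" "r \<le> 1"
  shows "t \<le> t powr r"
proof (cases "t = 0")
  case False
  then have "t powr 1 \<le> t powr r" using assms by (intro powr_mono') auto
  then show ?thesis using False assms by simp
qed simp

lemma concave_powr:
  fixes r u v l :: real
  assumes "0 < r" "r \<le> 1" "0 \<le> u" "0 \<le> v" "0 \<le> l" "l \<le> 1"
  shows "l * u powr r + (1-l) * v powr r \<le> (l * u + (1-l) * v) powr r"
proof (cases "u = 0 \<or> v = 0")
  case True
  then show ?thesis
  proof
    assume u: "u = 0"
    have "(1-l) * v powr r \<le> (1-l) powr r * v powr r"
      using assms le_powr_small[of "1-l" r] by (intro mult_right_mono) auto
    then show ?thesis using u assms by (simp add: powr_mult)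
  next
    assume v: "v = 0"
    have "l * u powr r \<le> l powr r * u powr r"
      using assms le_powr_small[of "l" r] by (intro mult_right_mono) auto
    then show ?thesis using v assms by (simp add: powr_mult)
  qed
next
  case False
  then have uv: "u > 0" "v > 0" using assms by auto
  define U where "U = u powr r"
  define V where "V = v powr r"
  have UV: "U > 0" "V > 0" using uv unfolding U_def V_def by auto
  have cv: "convex_on {0<..} (\<lambda>x::real. x powr (1/r))"
    using assms by (intro powr_convex) auto
  have "(l * U + (1-l) * V) powr (1/r) \<le> l * U powr (1/r) + (1-l) * V powr (1/r)"
    using convex_onD[OF cv, of "1-l" U V] UV assms by auto
  also have "\<dots> = l * u + (1-l) * v"
    using uv assms unfolding U_def V_def by (simp add: powr_powr)
  finally have "((l * U + (1-l) * V) powr (1/r)) powr r \<le> (l * u + (1-l) * v) powr r"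
    using assms UV by (intro powr_mono2) auto
  moreover have "((l * U + (1-l) * V) powr (1/r)) powr r = l * U + (1-l) * V"
    using assms UV by (simp add: powr_powr)
  ultimately show ?thesis unfolding U_def V_def by simp
qed

lemma rev_mink:
  fixes M :: "'a measure" and r :: real and f g :: "'a \<Rightarrow> real"
  assumes r: "0 < r" "r \<le> 1" and int: "integrable M f" "integrable M g"
    and nn: "\<And>t. 0 \<le> f t" "\<And>t. 0 \<le> g t"
    and intS: "integrable M (\<lambda>t. (f t powr (1/r) + g t powr (1/r)) powr r)"
  shows "((\<integral>t. f t \<partial>M) powr (1/r) + (\<integral>t. g t \<partial>M) powr (1/r)) powr r
    \<le> (\<integral>t. (f t powr (1/r) + g t powr (1/r)) powr r \<partial>M)"
proof -
  define S where "S = (\<lambda>t. (f t powr (1/r) + g t powr (1/r)) powr r)"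
  define a where "a = (\<integral>t. f t \<partial>M)"
  define b where "b = (\<integral>t. g t \<partial>M)"
  have a0: "a \<ge> 0" unfolding a_def using nn by (intro integral_nonneg_AE) auto
  have b0: "b \<ge> 0" unfolding b_def using nn by (intro integral_nonneg_AE) auto
  have fS: "f t \<le> S t" for t
  proof -
    have "f t = (f t powr (1/r)) powr r" using nn r by (simp add: powr_powr)
    also have "\<dots> \<le> S t" unfolding S_def using nn r by (intro powr_mono2) auto
    finally show ?thesis .
  qed
  have gS: "g t \<le> S t" for t
  proof -
    have "g t = (g t powr (1/r)) powr r" using nn r by (simp add: powr_powr)
    also have "\<dots> \<le> S t" unfolding S_def using nn r by (intro powr_mono2) auto
    finally show ?thesis .
  qed
  have intS': "integrable M S" using intS unfolding S_def .
  have pp: "(x powr (1/r)) powr r = x" if "x \<ge> 0" for x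
    using that r by (simp add: powr_powr)
  show ?thesis
    unfolding S_def[symmetric] a_def[symmetric] b_def[symmetric]
  proof (cases "a = 0 \<or> b = 0")
    case True
    then show "(a powr (1/r) + b powr (1/r)) powr r \<le> integral\<^sup>L M S"
    proof
      assume "a = 0"
      then have "(a powr (1/r) + b powr (1/r)) powr r = b" using b0 pp by simp
      also have "b \<le> integral\<^sup>L M S" unfolding b_def using int intS' gS by (intro integral_mono) auto
      finally show ?thesis .
    next
      assume "b = 0"
      then have "(a powr (1/r) + b powr (1/r)) powr r = a" using a0 pp by simp
      also have "a \<le> integral\<^sup>L M S" unfolding a_def using int intS' fS by (intro integral_mono) auto
      finally show ?thesis .
    qed
  next
    case False
    then have ab: "a > 0" "b > 0" using a0 b0 by auto
    define A where "A = a powr (1/r)"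
    define B where "B = b powr (1/r)"
    have AB: "A > 0" "B > 0" using ab unfolding A_def B_def by auto
    define l where "l = A / (A + B)"
    have l: "0 \<le> l" "l \<le> 1" "1 - l = B / (A + B)" using AB unfolding l_def by (auto simp: field_simps)
    have Ar: "A powr r = a" "B powr r = b" unfolding A_def B_def using ab pp by auto
    have pw: "(A + B) powr r * (l * (f t / a) + (1 - l) * (g t / b)) \<le> S t" for t
    proof -
      define X where "X = f t powr (1/r) / A"
      define Y where "Y = g t powr (1/r) / B"
      have X0: "X \<ge> 0" "Y \<ge> 0" unfolding X_def Y_def using AB by auto
      have Xr: "X powr r = f t / a" "Y powr r = g t / b"
        unfolding X_def Y_def using AB nn pp Ar by (auto simp: powr_divide)
      have "l * X powr r + (1-l) * Y powr r \<le> (l * X + (1-l) * Y) powr r"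
        using r X0 l by (intro concave_powr) auto
      also have "l * X + (1-l) * Y = (f t powr (1/r) + g t powr (1/r)) / (A + B)"
      proof -
        have "l * X = f t powr (1/r) / (A + B)" unfolding l_def X_def using AB by simp
        moreover have "(1-l) * Y = g t powr (1/r) / (A + B)" unfolding l(3) Y_def using AB by simp
        ultimately show ?thesis by (simp add: add_divide_distrib)
      qed
      also have "((f t powr (1/r) + g t powr (1/r)) / (A + B)) powr r = S t / (A + B) powr r"
        unfolding S_def using AB by (simp add: powr_divide)
      finally have "l * (f t / a) + (1-l) * (g t / b) \<le> S t / (A + B) powr r"
        using Xr by simp
      then show ?thesis using AB by (simp add: field_simps)
    qed
    have "(A + B) powr r = (\<integral>t. (A + B) powr r * (l * (f t / a) + (1 - l) * (g t / b)) \<partial>M)"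
    proof -
      have "(\<integral>t. (A + B) powr r * (l * (f t / a) + (1 - l) * (g t / b)) \<partial>M)
          = (A + B) powr r * (l * (a / a) + (1 - l) * (b / b))"
        using int unfolding a_def b_def by simp
      then show ?thesis using ab by simp
    qed
    also have "\<dots> \<le> integral\<^sup>L M S"
      using int intS' pw by (intro integral_mono) auto
    finally show "(a powr (1/r) + b powr (1/r)) powr r \<le> integral\<^sup>L M S"
      unfolding A_def B_def .
  qed
qed

lemma pow_bound:
  fixes u v p :: real
  assumes "0 < p"
  shows "\<bar>u+v\<bar> powr p \<le> 2 powr p * (\<bar>u\<bar> powr p + \<bar>v\<bar> powr p)"
proof -
  have "\<bar>u+v\<bar> powr p \<le> (2 * max \<bar>u\<bar> \<bar>v\<bar>) powr p"
    using assms by (intro powr_mono2) auto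
  also have "\<dots> = 2 powr p * max \<bar>u\<bar> \<bar>v\<bar> powr p" by (simp add: powr_mult)
  also have "max \<bar>u\<bar> \<bar>v\<bar> powr p \<le> \<bar>u\<bar> powr p + \<bar>v\<bar> powr p"
    by (cases "\<bar>u\<bar> \<le> \<bar>v\<bar>") (auto simp: max_def)
  then have "2 powr p * max \<bar>u\<bar> \<bar>v\<bar> powr p \<le> 2 powr p * (\<bar>u\<bar> powr p + \<bar>v\<bar> powr p)"
    by (intro mult_left_mono) auto
  finally show ?thesis .
qed

lemma memLp_lin:
  assumes "0 < p" "memLp p M f" "memLp p M g"
  shows "memLp p M (\<lambda>t. a * f t + b * g t)"
proof -
  have mf: "f \<in> borel_measurable M" and mg: "g \<in> borel_measurable M"
    and if_: "integrable M (\<lambda>x. \<bar>f x\<bar> powr p)" and ig: "integrable M (\<lambda>x. \<bar>g x\<bar> powr p)"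
    using assms unfolding memLp_def by auto
  have m: "(\<lambda>t. a * f t + b * g t) \<in> borel_measurable M" using mf mg by measurable
  have "integrable M (\<lambda>t. 2 powr p * (\<bar>a\<bar> powr p * \<bar>f t\<bar> powr p + \<bar>b\<bar> powr p * \<bar>g t\<bar> powr p))"
    using if_ ig by auto
  moreover have "(\<lambda>t. \<bar>a * f t + b * g t\<bar> powr p) \<in> borel_measurable M" using m by measurable
  moreover have "AE t in M. norm (\<bar>a * f t + b * g t\<bar> powr p) \<le>
      norm (2 powr p * (\<bar>a\<bar> powr p * \<bar>f t\<bar> powr p + \<bar>b\<bar> powr p * \<bar>g t\<bar> powr p))"
  proof (intro AE_I2)
    fix t
    have "\<bar>a * f t + b * g t\<bar> powr p \<le> 2 powr p * (\<bar>a * f t\<bar> powr p + \<bar>b * g t\<bar> powr p)"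
      using assms(1) by (rule pow_bound)
    also have "\<dots> = 2 powr p * (\<bar>a\<bar> powr p * \<bar>f t\<bar> powr p + \<bar>b\<bar> powr p * \<bar>g t\<bar> powr p)"
      by (simp add: abs_mult powr_mult)
    finally show "norm (\<bar>a * f t + b * g t\<bar> powr p) \<le>
      norm (2 powr p * (\<bar>a\<bar> powr p * \<bar>f t\<bar> powr p + \<bar>b\<bar> powr p * \<bar>g t\<bar> powr p))"
      by simp
  qed
  ultimately have "integrable M (\<lambda>t. \<bar>a * f t + b * g t\<bar> powr p)"
    by (rule Bochner_Integration.integrable_bound)
  then show ?thesis using m unfolding memLp_def by simp
qed

lemma Lp_norm_sq:
  assumes "0 < p"
  shows "(Lp_norm p M h)^2 = (\<integral>t. \<bar>h t\<bar> powr p \<partial>M) powr (2/p)"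
proof -
  have "(Lp_norm p M h)^2 = Lp_norm p M h * Lp_norm p M h" by (simp add: power2_eq_square)
  also have "\<dots> = (\<integral>t. \<bar>h t\<bar> powr p \<partial>M) powr (1/p + 1/p)"
    unfolding Lp_norm_def by (rule powr_add[symmetric])
  also have "1/p + 1/p = 2/p" by simp
  finally show ?thesis by simp
qed

lemma Lp_norm_scale:
  assumes "0 < p"
  shows "Lp_norm p M (\<lambda>t. c * h t) = \<bar>c\<bar> * Lp_norm p M h"
proof -
  have "(\<integral>t. \<bar>c * h t\<bar> powr p \<partial>M) = \<bar>c\<bar> powr p * (\<integral>t. \<bar>h t\<bar> powr p \<partial>M)"
    by (simp add: abs_mult powr_mult)
  moreover have "0 \<le> (\<integral>t. \<bar>h t\<bar> powr p \<partial>M)" by (intro integral_nonneg_AE) auto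
  ultimately show ?thesis unfolding Lp_norm_def using assms
    by (simp add: powr_mult powr_powr)
qed

lemma Lp_norm_cong_abs:
  assumes "\<And>t. \<bar>h1 t\<bar> = \<bar>h2 t\<bar>"
  shows "Lp_norm p M h1 = Lp_norm p M h2"
  unfolding Lp_norm_def using assms by simp

lemma powr_p_2p:
  fixes x p :: real
  assumes "0 \<le> x" "0 < p"
  shows "(x powr p) powr (1/(p/2)) = x^2"
proof (cases "x = 0")
  case False
  then have "(x powr p) powr (1/(p/2)) = x powr 2" using assms by (simp add: powr_powr)
  also have "\<dots> = x^2" using False assms by (simp add: powr_realpow)
  finally show ?thesis .
qed simp

lemma core:
  fixes M :: "'a measure" and p :: real and f g :: "'a \<Rightarrow> real"
  assumes p: "1 < p" "p \<le> 2" and mf: "memLp p M f" and mg: "memLp p M g"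
  shows "2 * (Lp_norm p M f)^2 + 2 * (p-1) * (Lp_norm p M g)^2
    \<le> (Lp_norm p M (\<lambda>t. f t + g t))^2 + (Lp_norm p M (\<lambda>t. f t - g t))^2"
proof -
  define r where "r = p/2"
  have r: "0 < r" "r \<le> 1" using p unfolding r_def by auto
  have ir: "1/r = 2/p" unfolding r_def by simp
  have p0: "0 < p" using p by simp
  have mpl: "memLp p M (\<lambda>t. f t + g t)" using memLp_lin[OF p0 mf mg, of 1 1] by simp
  have mmi: "memLp p M (\<lambda>t. f t - g t)" using memLp_lin[OF p0 mf mg, of 1 "-1"] by simp
  define Nf where "Nf = (\<integral>t. \<bar>f t\<bar> powr p \<partial>M)"
  define Ng where "Ng = (\<integral>t. \<bar>g t\<bar> powr p \<partial>M)"
  define Sn where "Sn = (\<integral>t. \<bar>f t + g t\<bar> powr p \<partial>M)"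
  define Dn where "Dn = (\<integral>t. \<bar>f t - g t\<bar> powr p \<partial>M)"
  have nn: "Nf \<ge> 0" "Ng \<ge> 0" "Sn \<ge> 0" "Dn \<ge> 0"
    unfolding Nf_def Ng_def Sn_def Dn_def by (auto intro!: integral_nonneg_AE)
  have intf: "integrable M (\<lambda>t. \<bar>f t\<bar> powr p)" using mf unfolding memLp_def by simp
  have intg: "integrable M (\<lambda>t. (p-1) powr r * \<bar>g t\<bar> powr p)" using mg unfolding memLp_def by simp
  have intpl: "integrable M (\<lambda>t. \<bar>f t + g t\<bar> powr p)" using mpl unfolding memLp_def by simp
  have intmi: "integrable M (\<lambda>t. \<bar>f t - g t\<bar> powr p)" using mmi unfolding memLp_def by simp
  have e1: "(\<bar>f t\<bar> powr p) powr (1/r) = (f t)^2" for t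
    unfolding r_def using powr_p_2p[of "\<bar>f t\<bar>" p] p0 by simp
  have e2: "((p-1) powr r * \<bar>g t\<bar> powr p) powr (1/r) = (p-1) * (g t)^2" for t
  proof -
    have "((p-1) powr r * \<bar>g t\<bar> powr p) powr (1/r) = ((p-1) powr r) powr (1/r) * (\<bar>g t\<bar> powr p) powr (1/r)"
      using p by (simp add: powr_mult)
    also have "((p-1) powr r) powr (1/r) = p - 1" using p r by (simp add: powr_powr)
    also have "(\<bar>g t\<bar> powr p) powr (1/r) = (g t)^2"
      unfolding r_def using powr_p_2p[of "\<bar>g t\<bar>" p] p0 by simp
    finally show ?thesis .
  qed
  define S where "S = (\<lambda>t. ((f t)^2 + (p-1) * (g t)^2) powr r)"
  have Sle: "S t \<le> (\<bar>f t + g t\<bar> powr p + \<bar>f t - g t\<bar> powr p) / 2" for t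
    unfolding S_def r_def using two_point[OF p] by simp
  have intS: "integrable M S"
  proof (rule Bochner_Integration.integrable_bound)
    show "integrable M (\<lambda>t. (\<bar>f t + g t\<bar> powr p + \<bar>f t - g t\<bar> powr p) / 2)"
      using intpl intmi by auto
    have bf: "f \<in> borel_measurable M" and bg: "g \<in> borel_measurable M"
      using mf mg unfolding memLp_def by auto
    show "S \<in> borel_measurable M" using bf bg unfolding S_def by measurable
    show "AE t in M. norm (S t) \<le> norm ((\<bar>f t + g t\<bar> powr p + \<bar>f t - g t\<bar> powr p) / 2)"
      using Sle unfolding S_def by (auto intro!: AE_I2)
  qed
  have "(Nf powr (1/r) + ((\<integral>t. (p-1) powr r * \<bar>g t\<bar> powr p \<partial>M)) powr (1/r)) powr r
      \<le> (\<integral>t. ((\<bar>f t\<bar> powr p) powr (1/r) + ((p-1) powr r * \<bar>g t\<bar> powr p) powr (1/r)) powr r \<partial>M)"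
    unfolding Nf_def
  proof (rule rev_mink[OF r intf intg])
    show "integrable M (\<lambda>t. ((\<bar>f t\<bar> powr p) powr (1/r) + ((p-1) powr r * \<bar>g t\<bar> powr p) powr (1/r)) powr r)"
      unfolding e1 e2 using intS unfolding S_def .
  qed auto
  also have "\<dots> = (\<integral>t. S t \<partial>M)" unfolding e1 e2 S_def ..
  also have "\<dots> \<le> (\<integral>t. (\<bar>f t + g t\<bar> powr p + \<bar>f t - g t\<bar> powr p) / 2 \<partial>M)"
    using intS intpl intmi Sle by (intro integral_mono) auto
  also have "\<dots> = (Sn + Dn) / 2"
    unfolding Sn_def Dn_def using intpl intmi by simp
  also have "\<dots> = (1/2) * (Sn powr (1/r)) powr r + (1 - 1/2) * (Dn powr (1/r)) powr r"
    using nn r by (simp add: powr_powr)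
  also have "\<dots> \<le> ((1/2) * Sn powr (1/r) + (1 - 1/2) * Dn powr (1/r)) powr r"
    using r by (intro concave_powr) auto
  finally have main: "(Nf powr (1/r) + (p-1) * Ng powr (1/r)) powr r
      \<le> ((Sn powr (1/r) + Dn powr (1/r)) / 2) powr r"
  proof -
    assume h: "(Nf powr (1/r) + ((\<integral>t. (p-1) powr r * \<bar>g t\<bar> powr p \<partial>M)) powr (1/r)) powr r
      \<le> ((1/2) * Sn powr (1/r) + (1 - 1/2) * Dn powr (1/r)) powr r"
    have i1: "(\<integral>t. (p-1) powr r * \<bar>g t\<bar> powr p \<partial>M) = (p-1) powr r * Ng"
      unfolding Ng_def by (rule integral_mult_right_zero)
    have i2: "((p-1) powr r * Ng) powr (1/r) = (p-1) * Ng powr (1/r)"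
      using p r nn by (simp add: powr_mult powr_powr)
    have eq: "((\<integral>t. (p-1) powr r * \<bar>g t\<bar> powr p \<partial>M)) powr (1/r) = (p-1) * Ng powr (1/r)"
      by (simp only: i1 i2)
    have eq2: "(1/2) * Sn powr (1/r) + (1 - 1/2) * Dn powr (1/r) = (Sn powr (1/r) + Dn powr (1/r)) / 2"
      by simp
    show ?thesis using h unfolding eq eq2 .
  qed
  have "Nf powr (1/r) + (p-1) * Ng powr (1/r) \<le> (Sn powr (1/r) + Dn powr (1/r)) / 2"
  proof -
    have "((Nf powr (1/r) + (p-1) * Ng powr (1/r)) powr r) powr (1/r)
        \<le> (((Sn powr (1/r) + Dn powr (1/r)) / 2) powr r) powr (1/r)"
      using main r p by (rule_tac powr_mono2) auto
    moreover have "0 \<le> Nf powr (1/r) + (p-1) * Ng powr (1/r)" using p by simp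
    moreover have "0 \<le> (Sn powr (1/r) + Dn powr (1/r)) / 2" by simp
    ultimately show ?thesis using r by (simp add: powr_powr)
  qed
  then show ?thesis
    unfolding Lp_norm_sq[OF p0] Nf_def[symmetric] Ng_def[symmetric] Sn_def[symmetric] Dn_def[symmetric]
      ir[symmetric] by (simp add: algebra_simps)
qed

lemma Lp_eq:
  assumes "0 < p" "0 \<le> c" "\<And>t. \<bar>h1 t\<bar> = c * \<bar>h2 t\<bar>"
  shows "Lp_norm p M h1 = c * Lp_norm p M h2"
proof -
  have "Lp_norm p M h1 = Lp_norm p M (\<lambda>t. c * h2 t)"
    using assms by (intro Lp_norm_cong_abs) (simp add: abs_mult)
  also have "\<dots> = c * Lp_norm p M h2" using assms by (simp add: Lp_norm_scale)
  finally show ?thesis .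
qed

lemma memLp_cong: "memLp p M f \<Longrightarrow> (\<And>t. f t = g t) \<Longrightarrow> memLp p M g"
proof -
  assume "memLp p M f" "\<And>t. f t = g t"
  moreover then have "f = g" by auto
  ultimately show ?thesis by simp
qed

lemma abs_half: "\<bar>(-1/2) * a + (1/2) * b\<bar> = (1/2) * \<bar>a - (b::real)\<bar>"
proof -
  have "(-1/2) * a + (1/2) * b = (1/2) * (b - a)" by (simp add: algebra_simps)
  moreover have "\<bar>1/2::real\<bar> = 1/2" by simp
  ultimately show ?thesis by (simp only: abs_mult abs_minus_commute[of b a])
qed

lemma abs_half2: "\<bar>(1/2) * a + (-1/2) * b\<bar> = (1/2) * \<bar>a - (b::real)\<bar>"
proof -
  have "(1/2) * a + (-1/2) * b = (1/2) * (a - b)" by (simp add: algebra_simps)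
  moreover have "\<bar>1/2::real\<bar> = 1/2" by simp
  ultimately show ?thesis by (simp only: abs_mult)
qed

theorem lemma2p1:
  fixes M :: "'a measure" and p :: real and x y z w :: "'a \<Rightarrow> real"
  assumes "1 < p" "p \<le> 2"
    and "memLp p M x" "memLp p M y" "memLp p M z" "memLp p M w"
  shows "(Lp_norm p M (\<lambda>t. y t - z t))\<^sup>2 + (p - 1) * (Lp_norm p M (\<lambda>t. x t - w t))\<^sup>2
    \<le> (Lp_norm p M (\<lambda>t. x t - y t))\<^sup>2 + (Lp_norm p M (\<lambda>t. y t - w t))\<^sup>2
     + (Lp_norm p M (\<lambda>t. w t - z t))\<^sup>2 + (Lp_norm p M (\<lambda>t. z t - x t))\<^sup>2"
proof -
  have p0: "0 < p" using assms by simp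
  note lin = memLp_lin[OF p0]
  define f1 where "f1 = (\<lambda>t. (-1/2) * y t + (1/2) * z t)"
  define g1 where "g1 = (\<lambda>t. x t - (y t + z t) / 2)"
  define g2 where "g2 = (\<lambda>t. w t - (y t + z t) / 2)"
  define f3 where "f3 = (\<lambda>t. (1/2) * x t + (-1/2) * w t)"
  define g3 where "g3 = (\<lambda>t. (x t + w t) / 2 - (y t + z t) / 2)"
  have mm: "memLp p M (\<lambda>t. (1/2) * y t + (1/2) * z t)" using lin[OF assms(4,5)] .
  have mf1: "memLp p M f1" unfolding f1_def using lin[OF assms(4,5)] .
  have mg1: "memLp p M g1" unfolding g1_def
    by (rule memLp_cong[OF lin[OF assms(3) mm, of 1 "-1"]]) (simp add: field_simps)
  have mg2: "memLp p M g2" unfolding g2_def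
    by (rule memLp_cong[OF lin[OF assms(6) mm, of 1 "-1"]]) (simp add: field_simps)
  have mf3: "memLp p M f3" unfolding f3_def using lin[OF assms(3,6)] .
  have mxw: "memLp p M (\<lambda>t. (1/2) * x t + (1/2) * w t)" using lin[OF assms(3,6)] .
  have mg3: "memLp p M g3" unfolding g3_def
    by (rule memLp_cong[OF lin[OF mxw mm, of 1 "-1"]]) (simp add: field_simps)
  define N where "N = (\<lambda>h. (Lp_norm p M h)^2)"
  have Nd: "(Lp_norm p M h)^2 = N h" for h unfolding N_def by simp
  have N0: "N h \<ge> 0" for h unfolding N_def by simp
  have Nhalf: "N h1 = (1/4) * N h2" if "\<And>t. \<bar>h1 t\<bar> = (1/2) * \<bar>h2 t\<bar>" for h1 h2
  proof -
    have e: "Lp_norm p M h1 = (1/2) * Lp_norm p M h2" using that by (intro Lp_eq[OF p0]) auto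
    show ?thesis unfolding N_def e by (simp add: power_mult_distrib power2_eq_square)
  qed
  have Neq: "N h1 = N h2" if "\<And>t. \<bar>h1 t\<bar> = \<bar>h2 t\<bar>" for h1 h2
    unfolding N_def using Lp_norm_cong_abs[of h1 h2] that by simp
  note c1 = core[OF assms(1,2) mf1 mg1]
  note c2 = core[OF assms(1,2) mf1 mg2]
  note c3 = core[OF assms(1,2) mf3 mg3]
  have Nsym: "N (\<lambda>t. a t - b t) = N (\<lambda>t. b t - a t)" for a b
    by (rule Neq) (simp add: abs_minus_commute)
  have fe1: "(\<lambda>t. f1 t + g1 t) = (\<lambda>t. x t - y t)" by (rule ext) (simp add: f1_def g1_def field_simps)
  have fe2: "(\<lambda>t. f1 t - g1 t) = (\<lambda>t. z t - x t)" by (rule ext) (simp add: f1_def g1_def field_simps)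
  have fe3: "(\<lambda>t. f1 t + g2 t) = (\<lambda>t. w t - y t)" by (rule ext) (simp add: f1_def g2_def field_simps)
  have fe4: "(\<lambda>t. f1 t - g2 t) = (\<lambda>t. z t - w t)" by (rule ext) (simp add: f1_def g2_def field_simps)
  have fe5: "(\<lambda>t. f3 t + g3 t) = g1" by (rule ext) (simp add: f3_def g3_def g1_def field_simps)
  have fe6: "(\<lambda>t. f3 t - g3 t) = (\<lambda>t. ((y t + z t) / 2) - w t)" by (rule ext) (simp add: f3_def g3_def field_simps)
  have Nf1: "N f1 = (1/4) * N (\<lambda>t. y t - z t)" by (rule Nhalf) (simp only: f1_def abs_half)
  have Nf3: "N f3 = (1/4) * N (\<lambda>t. x t - w t)"
    by (rule Nhalf) (simp only: f3_def abs_half2)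
  have I: "(1/2) * N (\<lambda>t. y t - z t) + 2 * (p-1) * N g1
      \<le> N (\<lambda>t. x t - y t) + N (\<lambda>t. z t - x t)"
    using c1 unfolding Nd fe1 fe2 Nf1 by simp
  have II: "(1/2) * N (\<lambda>t. y t - z t) + 2 * (p-1) * N g2
      \<le> N (\<lambda>t. y t - w t) + N (\<lambda>t. w t - z t)"
    using c2 unfolding Nd fe3 fe4 Nf1 Nsym[of w y] Nsym[of z w] by simp
  have III: "(1/2) * N (\<lambda>t. x t - w t) \<le> N g1 + N g2"
  proof -
    have "N (\<lambda>t. ((y t + z t) / 2) - w t) = N g2" unfolding g2_def by (rule Nsym)
    then have "2 * N f3 + 2 * (p-1) * N g3 \<le> N g1 + N g2"
      using c3 unfolding Nd fe5 fe6 by simp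
    moreover have "0 \<le> 2 * (p-1) * N g3" using assms N0 by simp
    ultimately show ?thesis unfolding Nf3 by simp
  qed
  have "(p-1) * N (\<lambda>t. x t - w t) \<le> 2 * (p-1) * (N g1 + N g2)"
  proof -
    have "N (\<lambda>t. x t - w t) \<le> 2 * (N g1 + N g2)" using III by simp
    then have "(p-1) * N (\<lambda>t. x t - w t) \<le> (p-1) * (2 * (N g1 + N g2))"
      using assms by (intro mult_left_mono) auto
    then show ?thesis by (simp add: algebra_simps)
  qed
  then have "N (\<lambda>t. y t - z t) + (p-1) * N (\<lambda>t. x t - w t)
    \<le> N (\<lambda>t. x t - y t) + N (\<lambda>t. y t - w t) + N (\<lambda>t. w t - z t) + N (\<lambda>t. z t - x t)"
    using I II by (simp add: algebra_simps)
  then show ?thesis unfolding N_def .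
qed

end
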